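(* Let $G$ be a complete split graph with vertex set $Q'\cup S'$ (disjoint), where $|Q'|\geq 1$, $|S'|\geq 2$, $Q'$ is a clique, $S'$ is a stable set, and every vertex of $Q'$ is adjacent to every vertex of $S'$. Then $\eta(G)=|Q'|$.
   Context: All graphs are finite, simple and undirected. For a vertex $v$, $N(v)$ is its set of neighbours. For a positive integer $k$, $[k]=\{1,\dots,k\}$. For a labeling $f:V(G)\to[k]$ and $S\subseteq V(G)$, $f(S)=\sum_{u\in S}f(u)$. A labeling $f:V(G)\to[k]$ is an additive $k$-coloring if $f(N(u))\neq f(N(v))$ for every edge $(u,v)$ of $G$. The additive chromatic number $\eta(G)$ is the least $k$ for which $G$ has an additive $k$-coloring. *)

theory Defs
  imports Main
begin

definition simple_graph :: "'a set \<Rightarrow> ('a \<Rightarrow> 'a \<Rightarrow> bool) \<Rightarrow> bool" where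
  "simple_graph V E \<longleftrightarrow> finite V \<and>
     (\<forall>u v. E u v \<longrightarrow> u \<in> V \<and> v \<in> V) \<and>
     (\<forall>u v. E u v \<longrightarrow> E v u) \<and> (\<forall>v. \<not> E v v)"

definition nbhd :: "'a set \<Rightarrow> ('a \<Rightarrow> 'a \<Rightarrow> bool) \<Rightarrow> 'a \<Rightarrow> 'a set" where
  "nbhd V E v = {u \<in> V. E v u}"

definition additive_coloring :: "'a set \<Rightarrow> ('a \<Rightarrow> 'a \<Rightarrow> bool) \<Rightarrow> nat \<Rightarrow> ('a \<Rightarrow> nat) \<Rightarrow> bool" where
  "additive_coloring V E k f \<longleftrightarrow>
     (\<forall>v\<in>V. f v \<in> {1..k}) \<and>
     (\<forall>u\<in>V. \<forall>v\<in>V. E u v \<longrightarrow> sum f (nbhd V E u) \<noteq> sum f (nbhd V E v))"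

definition additive_chromatic_number :: "'a set \<Rightarrow> ('a \<Rightarrow> 'a \<Rightarrow> bool) \<Rightarrow> nat" where
  "additive_chromatic_number V E = (LEAST k. k \<ge> 1 \<and> (\<exists>f. additive_coloring V E k f))"

end

theory Submission
  imports Defs
begin

theorem mainTheorem11:
  fixes Q S :: "'a set" and E :: "'a \<Rightarrow> 'a \<Rightarrow> bool"
  assumes "simple_graph (Q \<union> S) E"
    and "Q \<inter> S = {}"
    and "card Q \<ge> 1" and "card S \<ge> 2"
    and "\<forall>u\<in>Q. \<forall>v\<in>Q. u \<noteq> v \<longrightarrow> E u v"
    and "\<forall>u\<in>S. \<forall>v\<in>S. \<not> E u v"
    and "\<forall>u\<in>Q. \<forall>v\<in>S. E u v"
  shows "additive_chromatic_number (Q \<union> S) E = card Q"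
proof -
  let ?V = "Q \<union> S"
  have fin: "finite ?V" using assms(1) unfolding simple_graph_def by blast
  hence finQ: "finite Q" and finS: "finite S" by auto
  have irr: "\<And>v. \<not> E v v" using assms(1) unfolding simple_graph_def by blast
  have nbQ: "nbhd ?V E u = ?V - {u}" if "u \<in> Q" for u
    using that assms(5,7) irr unfolding nbhd_def by auto
  have nbS: "nbhd ?V E v = Q" if "v \<in> S" for v
  proof -
    have "E v u \<longleftrightarrow> u \<in> Q" if "u \<in> ?V" for u
      using that \<open>v \<in> S\<close> assms(1,6,7) unfolding simple_graph_def by blast
    thus ?thesis unfolding nbhd_def using \<open>v\<in>S\<close> by auto
  qed
  have remove: "sum f (?V - {u}) + f u = sum f Q + sum f S" if "u \<in> ?V" for u and f :: "'a \<Rightarrow> nat"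
  proof -
    have "sum f ?V = f u + sum f (?V - {u})" using sum.remove[OF fin that] by simp
    moreover have "sum f ?V = sum f Q + sum f S" using sum.union_disjoint[OF finQ finS assms(2)] by simp
    ultimately show ?thesis by simp
  qed
  have lower: "card Q \<le> k" if "additive_coloring ?V E k f" for k f
  proof -
    have inj: "inj_on f Q"
    proof (rule inj_onI)
      fix x y assume xy: "x \<in> Q" "y \<in> Q" "f x = f y"
      show "x = y"
      proof (rule ccontr)
        assume "x \<noteq> y"
        hence "E x y" using assms(5) xy by blast
        hence ne: "sum f (?V - {x}) \<noteq> sum f (?V - {y})"
        proof -
          have "sum f (nbhd ?V E x) \<noteq> sum f (nbhd ?V E y)"
            using that xy \<open>E x y\<close> unfolding additive_coloring_def by blast
          thus ?thesis using nbQ xy by simp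
        qed
        have "sum f (?V - {x}) + f x = sum f (?V - {y}) + f y"
          using remove[of x f] remove[of y f] xy by simp
        with xy(3) ne show False by simp
      qed
    qed
    have "f ` Q \<subseteq> {1..k}" using that unfolding additive_coloring_def by auto
    hence "card (f ` Q) \<le> card {1..k}" by (rule card_mono[rotated]) simp
    thus ?thesis using card_image[OF inj] by simp
  qed
  obtain h where h: "bij_betw h {0..<card Q} Q" using ex_bij_betw_nat_finite[OF finQ] by blast
  define g where "g = inv_into {0..<card Q} h"
  have g: "bij_betw g Q {0..<card Q}" unfolding g_def by (rule bij_betw_inv_into[OF h])
  have gQ: "g x < card Q" if "x \<in> Q" for x
    using bij_betw_apply[OF g that] by simp
  define f where "f x = (if x \<in> Q then g x + 1 else card Q)" for x
  have sumS: "sum f S = card S * card Q"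
  proof -
    have "sum f S = sum (\<lambda>_. card Q) S"
      using assms(2) unfolding f_def by (intro sum.cong) auto
    thus ?thesis by simp
  qed
  have col: "additive_coloring ?V E (card Q) f"
    unfolding additive_coloring_def
  proof (intro conjI ballI impI)
    fix v assume "v \<in> ?V"
    thus "f v \<in> {1..card Q}" using gQ assms(3) unfolding f_def by (auto simp: Suc_le_eq)
  next
    fix u v assume uv: "u \<in> ?V" "v \<in> ?V" "E u v"
    have fQ: "f x \<le> card Q" if "x \<in> Q" for x
      using that gQ unfolding f_def by (auto simp: Suc_le_eq)
    have big: "sum f S \<ge> 2 * card Q" using sumS assms(4) by simp
    show "sum f (nbhd ?V E u) \<noteq> sum f (nbhd ?V E v)"
    proof (cases "u \<in> Q")
      case uQ: True
      show ?thesis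
      proof (cases "v \<in> Q")
        case True
        have "u \<noteq> v" using uv irr by blast
        hence "g u \<noteq> g v" using g uQ True unfolding bij_betw_def inj_on_def by blast
        hence "f u \<noteq> f v" using uQ True unfolding f_def by simp
        thus ?thesis using nbQ[OF uQ] nbQ[OF True] remove[of u f] remove[of v f] uv by auto
      next
        case False
        hence vS: "v \<in> S" using uv by blast
        have "sum f (?V - {u}) \<noteq> sum f Q"
          using remove[of u f] uv fQ[OF uQ] big assms(3) by auto
        thus ?thesis using nbQ[OF uQ] nbS[OF vS] by simp
      qed
    next
      case False
      hence uS: "u \<in> S" using uv by blast
      hence vQ: "v \<in> Q" using uv assms(6) by blast
      have "sum f (?V - {v}) \<noteq> sum f Q"
        using remove[of v f] uv fQ[OF vQ] big assms(3) by auto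
      thus ?thesis using nbQ[OF vQ] nbS[OF uS] by simp
    qed
  qed
  show ?thesis unfolding additive_chromatic_number_def
  proof (rule Least_equality)
    show "card Q \<ge> 1 \<and> (\<exists>f. additive_coloring ?V E (card Q) f)" using assms(3) col by blast
  next
    fix k assume "1 \<le> k \<and> (\<exists>f. additive_coloring ?V E k f)"
    thus "card Q \<le> k" using lower by blast
  qed
qed

end
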